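(* Let $0\le a\le b\le n$ be integers with $a+b\le n$, and let $\varepsilon(a,b)$ be defined by $\mathbb E_{\mu_{ab}}[X]=\frac{a+b}{2}+\varepsilon(a,b)$, where $X$ has law $\mu_{ab}$. Then $\varepsilon(a,b)\ge0$. Moreover, $\varepsilon(a,b)\le\varepsilon(c,d)$ for any pair of integers $c,d$ with $c\le\min\{a,d\}\le\max\{a,d\}\le b$.
   Context: Fix $\beta>0$ and integer $n\ge1$. For integers $0\le a\le b\le n$, $\mu_{ab}$ is the probability distribution on $\{0,1,\dots,n\}$ given by $\mu_{ab}(j)=e^{-\beta(b-a)-2\beta(a-j)}/Z$ for $0\le j<a$, $\mu_{ab}(j)=e^{-\beta(b-a)}/Z$ for $a\le j\le b$, and $\mu_{ab}(j)=e^{-\beta(b-a)-2\beta(j-b)}/Z$ for $b<j\le n$, with $Z$ a normalizing constant. (This is the conditional law of the height at a site of the SOS model given that its two neighbouring heights have minimum $a$ and maximum $b$; i.e., the law of the new height after a column update.) For $c\le d$, $\varepsilon(c,d)$ is defined in the same way, $\varepsilon(c,d)=\mathbb E_{\mu_{cd}}[X]-\frac{c+d}2$. *)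

theory Defs
  imports Complex_Main
begin

definition sos_weight :: "real \<Rightarrow> int \<Rightarrow> int \<Rightarrow> int \<Rightarrow> real" where
  "sos_weight \<beta> a b j =
     (if j < a then exp (- \<beta> * of_int (b - a) - 2 * \<beta> * of_int (a - j))
      else if j \<le> b then exp (- \<beta> * of_int (b - a))
      else exp (- \<beta> * of_int (b - a) - 2 * \<beta> * of_int (j - b)))"

definition sos_Z :: "real \<Rightarrow> nat \<Rightarrow> int \<Rightarrow> int \<Rightarrow> real" where
  "sos_Z \<beta> n a b = (\<Sum>j\<in>{0..int n}. sos_weight \<beta> a b j)"

definition sos_mu :: "real \<Rightarrow> nat \<Rightarrow> int \<Rightarrow> int \<Rightarrow> int \<Rightarrow> real" where
  "sos_mu \<beta> n a b j = sos_weight \<beta> a b j / sos_Z \<beta> n a b"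

definition sos_mean :: "real \<Rightarrow> nat \<Rightarrow> int \<Rightarrow> int \<Rightarrow> real" where
  "sos_mean \<beta> n a b = (\<Sum>j\<in>{0..int n}. of_int j * sos_mu \<beta> n a b j)"

definition sos_eps :: "real \<Rightarrow> nat \<Rightarrow> int \<Rightarrow> int \<Rightarrow> real" where
  "sos_eps \<beta> n a b = sos_mean \<beta> n a b - of_int (a + b) / 2"

end

theory Submission
  imports Defs
begin


definition gg :: "real \<Rightarrow> nat \<Rightarrow> real" where "gg q m = (\<Sum>i<m. q^(i+1))"
definition ww :: "real \<Rightarrow> nat \<Rightarrow> real" where "ww q m = (\<Sum>i<m. real (i+1) * q^(i+1))"
definition psi :: "real \<Rightarrow> nat \<Rightarrow> real" where "psi q m = ww q m - gg q m * (gg q m + 1) / 2"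

lemma gg_Suc: "gg q (Suc m) = gg q m + q^(m+1)" by (simp add: gg_def)
lemma ww_Suc: "ww q (Suc m) = ww q m + real (m+1) * q^(m+1)" by (simp add: ww_def)
lemma gg_0[simp]: "gg q 0 = 0" by (simp add: gg_def)
lemma ww_0[simp]: "ww q 0 = 0" by (simp add: ww_def)

lemma gg_nonneg: "0 \<le> q \<Longrightarrow> 0 \<le> gg q m"
  by (induct m) (auto simp: gg_Suc)
lemma gg_le: "0 \<le> q \<Longrightarrow> q \<le> 1 \<Longrightarrow> gg q m \<le> real m"
proof (induct m)
  case (Suc m) then have "q^(m+1) \<le> 1" using power_le_one[of q "m+1"] by blast
  with Suc show ?case by (simp add: gg_Suc)
qed simp

lemma gg_add: "gg q (k+m) = gg q k + q^k * gg q m"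
  by (induct m) (simp_all add: gg_Suc algebra_simps power_add)
lemma ww_add: "ww q (k+m) = ww q k + q^k * (real k * gg q m + ww q m)"
  by (induct m) (simp_all add: gg_Suc ww_Suc algebra_simps power_add)

lemma gg_geom: "(1-q) * gg q m = q - q^(m+1)"
proof (induct m)
  case (Suc m)
  have "(1-q) * gg q (Suc m) = (1-q) * gg q m + (1-q)*q^(m+1)" by (simp add: gg_Suc algebra_simps)
  also have "\<dots> = q - q^(Suc m + 1)" using Suc by (simp add: algebra_simps)
  finally show ?case .
qed simp
lemma ww_geom: "(1-q) * ww q m = gg q m - real m * q^(m+1)"
proof (induct m)
  case (Suc m)
  have "(1-q) * ww q (Suc m) = (1-q) * ww q m + (1-q)*(real m + 1)*q^(m+1)" by (simp add: ww_Suc algebra_simps)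
  also have "\<dots> = gg q (Suc m) - real (Suc m) * q^(Suc m + 1)" using Suc by (simp add: gg_Suc algebra_simps)
  finally show ?case .
qed simp

lemma psi_mono_Suc:
  assumes "0 \<le> q" "q \<le> 1" shows "psi q m \<le> psi q (Suc m)"
proof -
  define y where "y = q^(m+1)"
  have y0: "0 \<le> y" "y \<le> 1" using assms power_le_one[of q "m+1"] by (auto simp: y_def)
  have gm: "gg q m \<le> real m" using gg_le assms by blast
  have "psi q (Suc m) - psi q m = y * (real m + 1 - gg q m - (y+1)/2)"
    by (simp add: psi_def gg_Suc ww_Suc y_def algebra_simps add_divide_distrib diff_divide_distrib)
  moreover have "0 \<le> y * (real m + 1 - gg q m - (y+1)/2)"
    using y0 gm by (intro mult_nonneg_nonneg) auto
  ultimately show ?thesis by linarith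
qed

lemma psi_mono: assumes "0 \<le> q" "q \<le> 1" "k \<le> m" shows "psi q k \<le> psi q m"
  using assms(3)
proof (induct m)
  case (Suc m) then show ?case using psi_mono_Suc[OF assms(1,2), of m] by (cases "k = Suc m") auto
qed simp

definition EE :: "real \<Rightarrow> real \<Rightarrow> nat \<Rightarrow> nat \<Rightarrow> real" where
  "EE q L A B = L * (gg q B - gg q A) + ww q B - ww q A"
definition ZZ :: "real \<Rightarrow> real \<Rightarrow> nat \<Rightarrow> nat \<Rightarrow> real" where
  "ZZ q L A B = 2 * L + 1 + gg q A + gg q B"

lemma ZZ_pos: "0 \<le> q \<Longrightarrow> 0 \<le> L \<Longrightarrow> 0 < ZZ q L A B"
  using gg_nonneg[of q A] gg_nonneg[of q B] by (simp add: ZZ_def)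

lemma gg_mono: "0 \<le> q \<Longrightarrow> K \<le> B \<Longrightarrow> gg q K \<le> gg q B"
  using gg_add[of q K "B-K"] gg_nonneg[of q "B-K"] by (simp add: zero_le_power)

lemma S2_ident:
  "EE q (L-1/2) A (Suc B) * ZZ q L A B - EE q L A B * ZZ q (L-1/2) A (Suc B)
   = (1 - q^(B+1)) * (psi q B - psi q A)
     + q^(B+1) * ZZ q L A B * (L + real B + 1/2 - (gg q B - gg q A)/2)"
  by (simp add: EE_def ZZ_def psi_def gg_Suc ww_Suc algebra_simps divide_simps)

lemma S2_core:
  assumes q: "0 < q" "q < 1" and AB: "A \<le> B" and L: "1/2 \<le> L"
  shows "EE q L A B / ZZ q L A B \<le> EE q (L-1/2) A (Suc B) / ZZ q (L-1/2) A (Suc B)"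
proof -
  have Z1: "0 < ZZ q L A B" using ZZ_pos q L by auto
  have Z2: "0 < ZZ q (L-1/2) A (Suc B)" using ZZ_pos q L by auto
  have y: "0 \<le> q^(B+1)" "q^(B+1) \<le> 1" using q power_le_one[of q "B+1"] by auto
  have p: "0 \<le> psi q B - psi q A" using psi_mono[of q A B] q AB by auto
  have gB: "gg q B \<le> real B" "0 \<le> gg q A" using gg_le[of q B] gg_nonneg[of q A] q by auto
  have "0 \<le> (1 - q^(B+1)) * (psi q B - psi q A)" using y p by auto
  moreover have "0 \<le> q^(B+1) * ZZ q L A B * (L + real B + 1/2 - (gg q B - gg q A)/2)"
    using y Z1 gB L by (intro mult_nonneg_nonneg) auto
  ultimately have "EE q L A B * ZZ q (L-1/2) A (Suc B) \<le> EE q (L-1/2) A (Suc B) * ZZ q L A B"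
    using S2_ident[of q L A B] by linarith
  then show ?thesis using Z1 Z2 by (simp add: divide_simps)
qed

lemma T_geom: "(1-(q::real)) * (\<Sum>i<K. q^i) = 1 - q^K"
proof (induct K)
  case (Suc K)
  have "(1-q) * (\<Sum>i<Suc K. q^i) = (1-q) * (\<Sum>i<K. q^i) + (1-q)*q^K" by (simp only: sum.lessThan_Suc distrib_left)
  also have "\<dots> = 1 - q^Suc K" using Suc by (simp add: algebra_simps)
  finally show ?case .
qed simp
lemma T_gg: "(\<Sum>i<K. (q::real)^i) = 1 + gg q K - q^K"
  by (induct K) (simp_all add: gg_Suc algebra_simps)

lemma L1:
  assumes q: "0 < q" "q < 1" and KB: "K \<le> B"
  shows "(1 - q^K) * (psi q B - psi q K)
         \<le> q^K * (1 + gg q K + gg q B) * (2 * real K + 1 + gg q B - gg q K) / 2"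
proof -
  define m where "m = B - K"
  have B: "B = K + m" using KB m_def by simp
  define z where "z = q^K"
  define h where "h = gg q m"
  define r where "r = ww q m"
  define g where "g = gg q K"
  define T where "T = (\<Sum>i<K. q^i)"
  have gB: "gg q B = g + z * h" by (simp add: B gg_add g_def z_def h_def)
  have wB: "ww q B = ww q K + z * (real K * h + r)" by (simp add: B ww_add z_def h_def r_def)
  have T1: "1 - z = (1-q) * T" using T_geom[of q K] by (simp add: T_def z_def)
  have T2: "T = 1 + g - z" using T_gg[of q K] by (simp add: T_def z_def g_def)
  have z0: "0 \<le> z" using q by (simp add: z_def)
  have h0: "0 \<le> h" using gg_nonneg q by (simp add: h_def)
  have g0: "0 \<le> g" using gg_nonneg q by (simp add: g_def)
  have T0: "0 \<le> T" unfolding T_def using q by (intro sum_nonneg) simp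
  have f3: "(1-q) * r \<le> h" using ww_geom[of q m] q by (simp add: r_def h_def)
  have pq: "0 \<le> q^(m+1)" using q by simp
  have f4: "(1-q) * h \<le> 1" using gg_geom[of q m] q pq unfolding h_def by linarith
  have a1: "(1-z) * r \<le> T * h"
  proof -
    have "(1-z) * r = T * ((1-q) * r)" by (simp add: T1)
    also have "\<dots> \<le> T * h" using f3 T0 by (rule mult_left_mono)
    finally show ?thesis .
  qed
  have a2: "(1-z) * h \<le> T"
  proof -
    have "(1-z) * h = T * ((1-q) * h)" by (simp add: T1)
    also have "\<dots> \<le> T * 1" using f4 T0 by (rule mult_left_mono)
    finally show ?thesis by simp
  qed
  have psiD: "psi q B - psi q K = z * (real K * h + r - h * (2*g + 1 + z*h) / 2)"
    by (simp add: psi_def gB wB g_def algebra_simps divide_simps)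
  have key: "(1-z) * (2*real K*h + 2*r - h*(2*g+1) - z*h^2) \<le> (1 + 2*g + z*h) * (2*real K + 1 + z*h)"
  proof -
    have id: "(1 + 2*g + z*h) * (2*real K + 1 + z*h) - (1-z) * (2*real K*h + 2*r - h*(2*g+1) - z*h^2)
      = 2 * (T*h - (1-z)*r) + (2*real K + 1) * ((1 + g) - (1-z)*h) + (2*real K + 1) * g
        + z*h*(2*real K + 2) + z*h^2"
      by (simp add: T2 algebra_simps power2_eq_square)
    have "0 \<le> (2*real K + 1) * ((1 + g) - (1-z)*h)" using a2 T2 z0 by (intro mult_nonneg_nonneg) auto
    moreover have "0 \<le> (2*real K + 1) * g" using g0 by simp
    moreover have "0 \<le> z*h*(2*real K + 2)" using z0 h0 by simp
    moreover have "0 \<le> z*h^2" using z0 by simp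
    moreover have "0 \<le> 2 * (T*h - (1-z)*r)" using a1 by simp
    ultimately have "0 \<le> 2 * (T*h - (1-z)*r) + (2*real K + 1) * ((1 + g) - (1-z)*h) + (2*real K + 1) * g
        + z*h*(2*real K + 2) + z*h^2" by linarith
    then have "0 \<le> (1 + 2*g + z*h) * (2*real K + 1 + z*h) - (1-z) * (2*real K*h + 2*r - h*(2*g+1) - z*h^2)"
      by (simp only: id)
    then show ?thesis by simp
  qed
  have "(1 - z) * (psi q B - psi q K) = z * ((1-z) * (2*real K*h + 2*r - h*(2*g+1) - z*h^2)) / 2"
    by (simp add: psiD algebra_simps divide_simps power2_eq_square)
  also have "\<dots> \<le> z * ((1 + 2*g + z*h) * (2*real K + 1 + z*h)) / 2"
    using key z0 by (simp add: mult_left_mono divide_right_mono)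
  also have "\<dots> = q^K * (1 + gg q K + gg q B) * (2 * real K + 1 + gg q B - gg q K) / 2"
    by (simp add: gB g_def z_def algebra_simps)
  finally show ?thesis by (simp add: z_def)
qed

lemma S1_ident:
  "EE q (L+1/2) A B * ZZ q L (Suc A) B - EE q L (Suc A) B * ZZ q (L+1/2) A B
   = q^(A+1) * ZZ q L (Suc A) B * ((gg q B - gg q (Suc A))/2 + L + real A + 3/2)
     - (1 - q^(A+1)) * (psi q B - psi q (Suc A))"
  by (simp add: EE_def ZZ_def psi_def gg_Suc ww_Suc algebra_simps divide_simps)

lemma S1_core:
  assumes q: "0 < q" "q < 1" and AB: "Suc A \<le> B" and L: "0 \<le> L"
  shows "EE q L (Suc A) B / ZZ q L (Suc A) B \<le> EE q (L+1/2) A B / ZZ q (L+1/2) A B"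
proof -
  have Z1: "0 < ZZ q L (Suc A) B" using ZZ_pos q L by auto
  have Z2: "0 < ZZ q (L+1/2) A B" using ZZ_pos q L by auto
  have gm: "gg q (Suc A) \<le> gg q B" using gg_mono q AB by auto
  have g0: "0 \<le> gg q (Suc A)" using gg_nonneg q by auto
  have y: "0 \<le> q^(A+1)" using q by auto
  have l1: "(1 - q^(Suc A)) * (psi q B - psi q (Suc A))
         \<le> q^(Suc A) * (1 + gg q (Suc A) + gg q B) * (2 * real (Suc A) + 1 + gg q B - gg q (Suc A)) / 2"
    using L1[OF q AB] .
  have m1: "1 + gg q (Suc A) + gg q B \<le> ZZ q L (Suc A) B" using L by (simp add: ZZ_def)
  have m2: "(2 * real (Suc A) + 1 + gg q B - gg q (Suc A)) / 2 \<le> (gg q B - gg q (Suc A))/2 + L + real A + 3/2"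
    using L by (simp add: field_simps)
  have "(1 + gg q (Suc A) + gg q B) * ((2 * real (Suc A) + 1 + gg q B - gg q (Suc A)) / 2)
      \<le> ZZ q L (Suc A) B * ((gg q B - gg q (Suc A))/2 + L + real A + 3/2)"
    using m1 m2 gm g0 by (intro mult_mono) auto
  then have "q^(A+1) * ((1 + gg q (Suc A) + gg q B) * ((2 * real (Suc A) + 1 + gg q B - gg q (Suc A)) / 2))
      \<le> q^(A+1) * (ZZ q L (Suc A) B * ((gg q B - gg q (Suc A))/2 + L + real A + 3/2))"
    using y by (rule mult_left_mono)
  moreover have "q^(Suc A) * (1 + gg q (Suc A) + gg q B) * (2 * real (Suc A) + 1 + gg q B - gg q (Suc A)) / 2
     = q^(A+1) * ((1 + gg q (Suc A) + gg q B) * ((2 * real (Suc A) + 1 + gg q B - gg q (Suc A)) / 2))"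
    by simp
  ultimately have "(1 - q^(A+1)) * (psi q B - psi q (Suc A))
     \<le> q^(A+1) * (ZZ q L (Suc A) B * ((gg q B - gg q (Suc A))/2 + L + real A + 3/2))"
    using l1 by simp
  then have "0 \<le> q^(A+1) * ZZ q L (Suc A) B * ((gg q B - gg q (Suc A))/2 + L + real A + 3/2)
     - (1 - q^(A+1)) * (psi q B - psi q (Suc A))" by (simp add: mult.assoc)
  then have "0 \<le> EE q (L+1/2) A B * ZZ q L (Suc A) B - EE q L (Suc A) B * ZZ q (L+1/2) A B"
    by (simp only: S1_ident)
  then have "EE q L (Suc A) B * ZZ q (L+1/2) A B \<le> EE q (L+1/2) A B * ZZ q L (Suc A) B"
    by simp
  then show ?thesis using Z1 Z2 by (simp add: divide_simps)
qed

lemma EE_nonneg: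
  assumes q: "0 \<le> q" and AB: "A \<le> B" and L: "0 \<le> L"
  shows "0 \<le> EE q L A B"
proof -
  have "gg q A \<le> gg q B" using gg_mono q AB by auto
  moreover have "ww q A \<le> ww q B"
    using ww_add[of q A "B-A"] AB q gg_nonneg[of q "B-A"]
    by (simp add: ww_def) (smt (verit) mult_nonneg_nonneg of_nat_0_le_iff sum_nonneg zero_le_power)
  ultimately show ?thesis using L unfolding EE_def by (smt (verit) mult_nonneg_nonneg)
qed



lemma weight_nat:
  fixes a b k :: nat
  assumes "a \<le> b"
  shows "sos_weight \<beta> (int a) (int b) (int k) =
    exp (- \<beta> * real (b - a)) * (if k < a then exp (-2*\<beta>) ^ (a - k) else if k \<le> b then 1 else exp (-2*\<beta>) ^ (k - b))"
proof -
  have ba: "of_int (int b - int a) = real (b - a)" using assms by simp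
  show ?thesis
  proof (cases "k < a")
    case True
    have "- \<beta> * of_int (int b - int a) - 2 * \<beta> * of_int (int a - int k) = - \<beta> * real (b - a) + real (a - k) * (-2*\<beta>)"
      using True assms by (simp add: of_nat_diff algebra_simps)
    then have e: "exp (- \<beta> * of_int (int b - int a) - 2 * \<beta> * of_int (int a - int k)) = exp (- \<beta> * real (b - a)) * exp (-2*\<beta>) ^ (a - k)"
      by (simp only: exp_add exp_of_nat_mult)
    show ?thesis using True e unfolding sos_weight_def by simp
  next
    case False
    show ?thesis
    proof (cases "k \<le> b")
      case True then show ?thesis using False ba unfolding sos_weight_def by simp
    next
      case F2: False
      have "- \<beta> * of_int (int b - int a) - 2 * \<beta> * of_int (int k - int b) = - \<beta> * real (b - a) + real (k - b) * (-2*\<beta>)"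
        using F2 assms by (simp add: of_nat_diff algebra_simps)
      then have e: "exp (- \<beta> * of_int (int b - int a) - 2 * \<beta> * of_int (int k - int b)) = exp (- \<beta> * real (b - a)) * exp (-2*\<beta>) ^ (k - b)"
        by (simp only: exp_add exp_of_nat_mult)
      show ?thesis using False F2 e unfolding sos_weight_def by simp
    qed
  qed
qed

lemma int_sum_nat: "(\<Sum>j\<in>{0..int n}. f j) = (\<Sum>k<Suc n. f (int k))"
proof -
  have "{0..int n} = int ` {..<Suc n}"
    by (auto simp: image_iff intro!: bexI[of _ "nat _"])
  then show ?thesis by (simp add: sum.reindex)
qed

lemma split3:
  fixes a b n :: nat
  assumes "a \<le> b" "b \<le> n"
  shows "(\<Sum>k<Suc n. f k) = (\<Sum>i<a. f (a - Suc i)) + (\<Sum>i<Suc (b - a). f (a + i)) + (\<Sum>i<n - b. f (Suc b + i))"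
proof -
  have 1: "sum f {0..<a} + sum f {a..<Suc b} = sum f {0..<Suc b}"
    by (rule sum.atLeastLessThan_concat) (use assms in auto)
  have 2: "sum f {0..<Suc b} + sum f {Suc b..<Suc n} = sum f {0..<Suc n}"
    by (rule sum.atLeastLessThan_concat) (use assms in auto)
  have "(\<Sum>k<Suc n. f k) = (\<Sum>k\<in>{0..<a}. f k) + (\<Sum>k\<in>{a..<Suc b}. f k) + (\<Sum>k\<in>{Suc b..<Suc n}. f k)"
    using 1 2 by (simp only: lessThan_atLeast0)
  moreover have "(\<Sum>k\<in>{0..<a}. f k) = (\<Sum>i<a. f (a - Suc i))"
    by (simp add: lessThan_atLeast0[symmetric] sum.nat_diff_reindex)
  moreover have "(\<Sum>k\<in>{a..<Suc b}. f k) = (\<Sum>i<Suc (b - a). f (a + i))"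
    using sum.shift_bounds_nat_ivl[of f 0 a "Suc b - a"] assms
    by (simp add: lessThan_atLeast0 add.commute Suc_diff_le)
  moreover have "(\<Sum>k\<in>{Suc b..<Suc n}. f k) = (\<Sum>i<n - b. f (Suc b + i))"
    using sum.shift_bounds_nat_ivl[of f 0 "Suc b" "n - b"] assms
    by (simp add: lessThan_atLeast0 add.commute)
  ultimately show ?thesis by simp
qed

lemma gauss_real: "(\<Sum>i<N. real i) = real N * (real N - 1) / 2"
  by (induct N) (simp_all add: field_simps)

lemma sum_lin: "(\<Sum>i<N. (c + real i)) = real N * c + real N * (real N - 1) / 2"
  by (simp add: sum.distrib gauss_real)

lemma conn:
  fixes a b n :: nat
  assumes ab: "a \<le> b" and bn: "b \<le> n"
  shows "sos_eps \<beta> n (int a) (int b) =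
     EE (exp (-2*\<beta>)) ((real b - real a)/2) a (n - b) / ZZ (exp (-2*\<beta>)) ((real b - real a)/2) a (n - b)"
proof -
  define q where "q = exp (-2*\<beta>)"
  define C where "C = exp (- \<beta> * real (b - a))"
  define L where "L = (real b - real a)/2"
  define m where "m = real (a + b) / 2"
  define wf where "wf k = (if k < a then q ^ (a - k) else if k \<le> b then 1 else q ^ (k - b))" for k
  have C0: "0 < C" by (simp add: C_def)
  have W: "sos_weight \<beta> (int a) (int b) (int k) = C * wf k" for k
    using weight_nat[OF ab] by (simp add: C_def wf_def q_def)
  have Zs: "sos_Z \<beta> n (int a) (int b) = C * ZZ q L a (n - b)"
  proof -
    have "sos_Z \<beta> n (int a) (int b) = (\<Sum>k<Suc n. C * wf k)"
      by (simp add: sos_Z_def int_sum_nat W)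
    also have "\<dots> = (\<Sum>i<a. C * wf (a - Suc i)) + (\<Sum>i<Suc (b - a). C * wf (a + i)) + (\<Sum>i<n - b. C * wf (Suc b + i))"
      by (rule split3[OF ab bn])
    also have "(\<Sum>i<a. C * wf (a - Suc i)) = C * gg q a"
      by (simp add: wf_def gg_def sum_distrib_left Suc_diff_Suc)
    also have "(\<Sum>i<Suc (b - a). C * wf (a + i)) = (\<Sum>i<Suc (b - a). C)"
      by (rule sum.cong) (use ab in \<open>auto simp: wf_def\<close>)
    also have "(\<Sum>i<Suc (b - a). C) = C * (real (b - a) + 1)" by simp
    also have "(\<Sum>i<n - b. C * wf (Suc b + i)) = (\<Sum>i<n - b. C * q^(i+1))"
      by (rule sum.cong) (use ab in \<open>auto simp: wf_def\<close>)
    also have "\<dots> = C * gg q (n - b)"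
      by (simp add: gg_def sum_distrib_left)
    finally show ?thesis using ab by (simp add: ZZ_def L_def field_simps of_nat_diff)
  qed
  have Zpos: "0 < sos_Z \<beta> n (int a) (int b)"
    using Zs C0 ZZ_pos[of q L a "n-b"] ab by (simp add: q_def L_def)
  have Ns: "(\<Sum>j\<in>{0..int n}. (of_int j - m) * sos_weight \<beta> (int a) (int b) j) = C * EE q L a (n - b)"
  proof -
    have "(\<Sum>j\<in>{0..int n}. (of_int j - m) * sos_weight \<beta> (int a) (int b) j) = (\<Sum>k<Suc n. C * ((real k - m) * wf k))"
      by (simp add: int_sum_nat W algebra_simps)
    also have "\<dots> = (\<Sum>i<a. C * ((real (a - Suc i) - m) * wf (a - Suc i)))
       + (\<Sum>i<Suc (b - a). C * ((real (a + i) - m) * wf (a + i)))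
       + (\<Sum>i<n - b. C * ((real (Suc b + i) - m) * wf (Suc b + i)))"
      by (rule split3[OF ab bn])
    also have "(\<Sum>i<a. C * ((real (a - Suc i) - m) * wf (a - Suc i))) = C * (- L * gg q a - ww q a)"
    proof -
      have "(\<Sum>i<a. C * ((real (a - Suc i) - m) * wf (a - Suc i))) = (\<Sum>i<a. C * ((- L - real (i+1)) * q^(i+1)))"
        by (rule sum.cong) (auto simp: wf_def Suc_diff_Suc of_nat_diff L_def m_def field_simps)
      also have "\<dots> = C * (- L * gg q a - ww q a)"
        by (simp add: gg_def ww_def sum_distrib_left sum_subtractf algebra_simps)
      finally show ?thesis .
    qed
    also have "(\<Sum>i<Suc (b - a). C * ((real (a + i) - m) * wf (a + i))) = 0"
    proof -
      have "(\<Sum>i<Suc (b - a). C * ((real (a + i) - m) * wf (a + i))) = (\<Sum>i<Suc (b - a). C * (real a - m + real i))"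
        by (rule sum.cong) (use ab in \<open>auto simp: wf_def\<close>)
      also have "\<dots> = C * (\<Sum>i<Suc (b - a). (real a - m + real i))"
        by (rule sum_distrib_left[symmetric])
      also have "(\<Sum>i<Suc (b - a). (real a - m + real i)) = real (Suc (b-a)) * (real a - m) + real (Suc (b - a)) * (real (Suc (b - a)) - 1) / 2"
        by (rule sum_lin)
      also have "\<dots> = 0" using ab by (simp add: m_def of_nat_diff field_simps)
      finally show ?thesis by simp
    qed
    also have "(\<Sum>i<n - b. C * ((real (Suc b + i) - m) * wf (Suc b + i))) = C * (L * gg q (n-b) + ww q (n-b))"
    proof -
      have "(\<Sum>i<n - b. C * ((real (Suc b + i) - m) * wf (Suc b + i))) = (\<Sum>i<n - b. C * ((L + real (i+1)) * q^(i+1)))"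
        by (rule sum.cong) (use ab in \<open>auto simp: wf_def L_def m_def field_simps\<close>)
      also have "\<dots> = C * (L * gg q (n-b) + ww q (n-b))"
        by (simp add: gg_def ww_def sum_distrib_left sum.distrib algebra_simps)
      finally show ?thesis .
    qed
    finally show ?thesis by (simp add: EE_def algebra_simps)
  qed
  have "sos_eps \<beta> n (int a) (int b) = (\<Sum>j\<in>{0..int n}. (of_int j - m) * sos_weight \<beta> (int a) (int b) j) / sos_Z \<beta> n (int a) (int b)"
  proof -
    have "(\<Sum>j\<in>{0..int n}. (of_int j - m) * sos_weight \<beta> (int a) (int b) j)
       = (\<Sum>j\<in>{0..int n}. of_int j * sos_weight \<beta> (int a) (int b) j) - m * sos_Z \<beta> n (int a) (int b)"
      by (simp add: sos_Z_def sum_subtractf sum_distrib_left algebra_simps)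
    then show ?thesis using Zpos
      by (simp add: sos_eps_def sos_mean_def sos_mu_def m_def sum_divide_distrib[symmetric] field_simps)
  qed
  also have "\<dots> = EE q L a (n - b) / ZZ q L a (n - b)" using Ns Zs C0 by simp
  finally show ?thesis by (simp add: q_def L_def)
qed



lemma q_bounds: "0 < \<beta> \<Longrightarrow> 0 < exp (-2*\<beta>) \<and> exp (-2*\<beta>) < (1::real)"
  by simp

lemma S2nat:
  fixes a b n :: nat
  assumes "0 < \<beta>" "a < b" "a + b \<le> n"
  shows "sos_eps \<beta> n (int a) (int b) \<le> sos_eps \<beta> n (int a) (int (b - 1))"
proof -
  have e1: "sos_eps \<beta> n (int a) (int b) = EE (exp (-2*\<beta>)) ((real b - real a)/2) a (n - b) / ZZ (exp (-2*\<beta>)) ((real b - real a)/2) a (n - b)"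
    using conn[of a b n \<beta>] assms by simp
  have e2: "sos_eps \<beta> n (int a) (int (b-1)) = EE (exp (-2*\<beta>)) ((real b - real a)/2 - 1/2) a (Suc (n - b)) / ZZ (exp (-2*\<beta>)) ((real b - real a)/2 - 1/2) a (Suc (n - b))"
  proof -
    have x: "n - (b - 1) = Suc (n - b)" "(real (b - 1) - real a)/2 = (real b - real a)/2 - 1/2"
      using assms by (auto simp: of_nat_diff field_simps)
    have "sos_eps \<beta> n (int a) (int (b-1)) = EE (exp (-2*\<beta>)) ((real (b - 1) - real a)/2) a (n - (b - 1)) / ZZ (exp (-2*\<beta>)) ((real (b - 1) - real a)/2) a (n - (b - 1))"
      by (rule conn) (use assms in auto)
    then show ?thesis by (simp only: x)
  qed
  show ?thesis unfolding e1 e2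
    by (rule S2_core) (use assms in auto)
qed

lemma S1nat:
  fixes A b n :: nat
  assumes "0 < \<beta>" "Suc A \<le> b" "Suc A + b \<le> n"
  shows "sos_eps \<beta> n (int (Suc A)) (int b) \<le> sos_eps \<beta> n (int A) (int b)"
proof -
  have e1: "sos_eps \<beta> n (int (Suc A)) (int b) = EE (exp (-2*\<beta>)) ((real b - real (Suc A))/2) (Suc A) (n - b) / ZZ (exp (-2*\<beta>)) ((real b - real (Suc A))/2) (Suc A) (n - b)"
    using conn[of "Suc A" b n \<beta>] assms by simp
  have e2: "sos_eps \<beta> n (int A) (int b) = EE (exp (-2*\<beta>)) ((real b - real (Suc A))/2 + 1/2) A (n - b) / ZZ (exp (-2*\<beta>)) ((real b - real (Suc A))/2 + 1/2) A (n - b)"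
  proof -
    have x: "(real b - real A)/2 = (real b - real (Suc A))/2 + 1/2" by (simp add: field_simps)
    have "sos_eps \<beta> n (int A) (int b) = EE (exp (-2*\<beta>)) ((real b - real A)/2) A (n - b) / ZZ (exp (-2*\<beta>)) ((real b - real A)/2) A (n - b)"
      by (rule conn) (use assms in auto)
    then show ?thesis by (simp only: x)
  qed
  show ?thesis unfolding e1 e2
    by (rule S1_core) (use assms in auto)
qed

lemma R1:
  fixes a b d n :: nat
  assumes "0 < \<beta>" "a \<le> d" "d \<le> b" "a + b \<le> n"
  shows "sos_eps \<beta> n (int a) (int b) \<le> sos_eps \<beta> n (int a) (int d)"
  using assms
proof (induct "b - d" arbitrary: b)
  case 0 then show ?case by simp
next
  case (Suc k)
  have "sos_eps \<beta> n (int a) (int b) \<le> sos_eps \<beta> n (int a) (int (b - 1))"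
    using S2nat[of \<beta> a b n] Suc by simp
  also have "\<dots> \<le> sos_eps \<beta> n (int a) (int d)"
    using Suc(1)[of "b - 1"] Suc by simp
  finally show ?case .
qed

lemma R2:
  fixes a b c n :: nat
  assumes "0 < \<beta>" "c \<le> a" "a \<le> b" "a + b \<le> n"
  shows "sos_eps \<beta> n (int a) (int b) \<le> sos_eps \<beta> n (int c) (int b)"
  using assms
proof (induct "a - c" arbitrary: a)
  case 0 then show ?case by simp
next
  case (Suc k)
  then obtain A where A: "a = Suc A" by (cases a) auto
  have "sos_eps \<beta> n (int a) (int b) \<le> sos_eps \<beta> n (int A) (int b)"
    using S1nat[of \<beta> A b n] Suc A by simp
  also have "\<dots> \<le> sos_eps \<beta> n (int c) (int b)"
    using Suc(1)[of A] Suc A by simp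
  finally show ?case .
qed

lemma nonneg_nat:
  fixes a b n :: nat
  assumes "0 < \<beta>" "a \<le> b" "a + b \<le> n"
  shows "0 \<le> sos_eps \<beta> n (int a) (int b)"
proof -
  have "0 \<le> EE (exp (-2*\<beta>)) ((real b - real a)/2) a (n - b)"
    using assms by (intro EE_nonneg) auto
  moreover have "0 < ZZ (exp (-2*\<beta>)) ((real b - real a)/2) a (n - b)"
    using assms by (intro ZZ_pos) auto
  ultimately show ?thesis using conn[of a b n \<beta>] assms by simp
qed

theorem lemma3p2:
  fixes \<beta> :: real and n :: nat and a b :: int
  assumes "\<beta> > 0" and "n \<ge> 1"
    and "0 \<le> a" and "a \<le> b" and "b \<le> int n" and "a + b \<le> int n"
  shows "sos_eps \<beta> n a b \<ge> 0 \<and>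
         (\<forall>c d :: int. 0 \<le> c \<and> c \<le> min a d \<and> max a d \<le> b \<longrightarrow>
            sos_eps \<beta> n a b \<le> sos_eps \<beta> n c d)"
proof
  obtain a' b' where a': "a = int a'" and b': "b = int b'"
    using assms by (metis nonneg_int_cases order_trans)
  show "sos_eps \<beta> n a b \<ge> 0"
    using nonneg_nat[of \<beta> a' b' n] assms a' b' by simp
  show "\<forall>c d :: int. 0 \<le> c \<and> c \<le> min a d \<and> max a d \<le> b \<longrightarrow> sos_eps \<beta> n a b \<le> sos_eps \<beta> n c d"
  proof (intro allI impI)
    fix c d :: int
    assume cd: "0 \<le> c \<and> c \<le> min a d \<and> max a d \<le> b"
    obtain c' d' where c': "c = int c'" and d': "d = int d'"
      using cd by (metis nonneg_int_cases min.bounded_iff order_trans)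
    have h: "c' \<le> a'" "c' \<le> d'" "a' \<le> b'" "d' \<le> b'" "a' + b' \<le> n"
      using cd assms a' b' c' d' by auto
    show "sos_eps \<beta> n a b \<le> sos_eps \<beta> n c d"
    proof (cases "a' \<le> d'")
      case True
      have "sos_eps \<beta> n (int a') (int b') \<le> sos_eps \<beta> n (int a') (int d')"
        using R1[of \<beta> a' d' b' n] True h assms by simp
      also have "\<dots> \<le> sos_eps \<beta> n (int c') (int d')"
        using R2[of \<beta> c' a' d' n] True h assms by simp
      finally show ?thesis using a' b' c' d' by simp
    next
      case False
      have "sos_eps \<beta> n (int a') (int b') \<le> sos_eps \<beta> n (int c') (int b')"
        using R2[of \<beta> c' a' b' n] h assms by simp
      also have "\<dots> \<le> sos_eps \<beta> n (int c') (int d')"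
        using R1[of \<beta> c' d' b' n] False h assms by simp
      finally show ?thesis using a' b' c' d' by simp
    qed
  qed
qed

end
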